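(* Let $\Gamma$ be a second countable locally compact abelian group, $n\ge2$, $\omega\in\Gamma^n$, and $X$ a non-empty $\omega$-invariant subset of $\Gamma$. The following are equivalent: (i) $X$ is prime; (ii) for any $\gamma_0,\gamma_1\in X$ and any neighborhoods $U_0,U_1$ of $\gamma_0,\gamma_1$, there exist $\gamma\in X$ and words $\mu,\nu$ with $\gamma+\omega_\mu\in U_0$ and $\gamma+\omega_\nu\in U_1$; (iii) for any $\gamma_0,\gamma_1\in X$ there exist sequences of words $\mu_1,\mu_2,\ldots$ and $\nu_1,\nu_2,\ldots$ with $\gamma_0-\omega_{\mu_k}\in X$, $\gamma_1-\omega_{\nu_k}\in X$ for all $k$ and $\lim_{k\to\infty}\big((\gamma_0-\omega_{\mu_k})-(\gamma_1-\omega_{\nu_k})\big)=0$; (iv) $X=\gamma+\Omega_{\mathbb{I}}$ for some $\gamma\in\Gamma$ and some non-empty $\mathbb{I}\subset\{1,\ldots,n\}$.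
   Context: $\Gamma$ is written additively. Words are finite sequences $\mu=(i_1,\ldots,i_k)$ in $\{1,\ldots,n\}$ (including the empty word), and $\omega_\mu=\sum_j\omega_{i_j}$ ($\omega_\emptyset=0$). A closed $X\subset\Gamma$ is $\omega$-invariant if $X+\omega_i\subset X$ for all $i$ and every $\gamma\in X$ has some $i$ with $\gamma-\omega_i\in X$; it is prime if for all $\omega$-invariant $X_1,X_2$ with $X\subset X_1\cup X_2$ one has $X\subset X_1$ or $X\subset X_2$. For non-empty $\mathbb{I}$, $\Omega_{\mathbb{I}}$ is the closed subsemigroup generated by $\omega_1,\ldots,\omega_n$ and $-\omega_i$ ($i\in\mathbb{I}$). *)

theory Defs
  imports "HOL-Analysis.Analysis"
begin

definition word_sum :: "(nat \<Rightarrow> 'a::comm_monoid_add) \<Rightarrow> nat list \<Rightarrow> 'a" where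
  "word_sum \<omega> \<mu> = sum_list (map \<omega> \<mu>)"

definition is_word :: "nat \<Rightarrow> nat list \<Rightarrow> bool" where
  "is_word n \<mu> \<longleftrightarrow> set \<mu> \<subseteq> {1..n}"

definition omega_invariant :: "nat \<Rightarrow> (nat \<Rightarrow> 'a::{topological_space,ab_group_add}) \<Rightarrow> 'a set \<Rightarrow> bool" where
  "omega_invariant n \<omega> X \<longleftrightarrow> closed X
     \<and> (\<forall>i\<in>{1..n}. \<forall>\<gamma>\<in>X. \<gamma> + \<omega> i \<in> X)
     \<and> (\<forall>\<gamma>\<in>X. \<exists>i\<in>{1..n}. \<gamma> - \<omega> i \<in> X)"

definition omega_prime :: "nat \<Rightarrow> (nat \<Rightarrow> 'a::{topological_space,ab_group_add}) \<Rightarrow> 'a set \<Rightarrow> bool" where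
  "omega_prime n \<omega> X \<longleftrightarrow> (\<forall>X1 X2. omega_invariant n \<omega> X1 \<longrightarrow> omega_invariant n \<omega> X2 \<longrightarrow>
      X \<subseteq> X1 \<union> X2 \<longrightarrow> X \<subseteq> X1 \<or> X \<subseteq> X2)"

definition Omega_set :: "nat \<Rightarrow> (nat \<Rightarrow> 'a::{topological_space,ab_group_add}) \<Rightarrow> nat set \<Rightarrow> 'a set" where
  "Omega_set n \<omega> I = \<Inter>{S. closed S \<and> \<omega> ` {1..n} \<subseteq> S \<and> (\<lambda>i. - \<omega> i) ` I \<subseteq> S
                          \<and> (\<forall>x\<in>S. \<forall>y\<in>S. x + y \<in> S)}"

end

theory Submission
  imports Defs
begin

lemma closure_add:
  fixes A :: "'a::topological_monoid_add set"
  assumes A: "\<forall>x\<in>A. \<forall>y\<in>A. x + y \<in> A" and x: "x \<in> closure A" and y: "y \<in> closure A"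
  shows "x + y \<in> closure A"
proof -
  have 1: "a + z \<in> closure A" if "a \<in> A" "z \<in> closure A" for a z
  proof -
    have c: "continuous_on (closure A) (\<lambda>z. a + z)" by (intro continuous_intros)
    have "(\<lambda>z. a + z) ` closure A \<subseteq> closure A"
      by (rule image_closure_subset[OF c]) (use A that closure_subset in auto)
    then show ?thesis using that by auto
  qed
  have c: "continuous_on (closure A) (\<lambda>x. x + y)" by (intro continuous_intros)
  have "(\<lambda>x. x + y) ` closure A \<subseteq> closure A"
    by (rule image_closure_subset[OF c]) (use 1 y in auto)
  then show ?thesis using x by auto
qed

lemma closure_neg:
  fixes A :: "'a::topological_group_add set"
  assumes A: "\<forall>x\<in>A. - x \<in> A" and x: "x \<in> closure A"
  shows "- x \<in> closure A"
proof -
  have c: "continuous_on (closure A) uminus" by (intro continuous_intros)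
  have "uminus ` closure A \<subseteq> closure A"
    by (rule image_closure_subset[OF c]) (use A closure_subset in auto)
  then show ?thesis using x by auto
qed

lemma exists_V:
  fixes V1 :: "'a::{topological_group_add,t2_space} set"
  assumes "open V1" "0 \<in> V1"
  shows "\<exists>V. open V \<and> 0 \<in> V \<and> (\<forall>a\<in>V. \<forall>b\<in>V. a - b \<in> V1)"
proof -
  have "isCont (\<lambda>z::'a\<times>'a. fst z - snd z) x" for x by (intro continuous_intros)
  from continuous_open_vimage[OF assms(1) this] have "open ((\<lambda>z::'a\<times>'a. fst z - snd z) -` V1)" by blast
  moreover have "(0, 0) \<in> (\<lambda>z::'a\<times>'a. fst z - snd z) -` V1" using assms by simp
  ultimately obtain A B where "open A" "open B" "(0,0) \<in> A \<times> B" "A \<times> B \<subseteq> (\<lambda>z::'a\<times>'a. fst z - snd z) -` V1"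
    by (rule open_prod_elim)
  then show ?thesis by (intro exI[of _ "A \<inter> B"]) auto
qed


lemma nat_mono_sub: fixes s :: "nat \<Rightarrow> nat" shows "\<exists>r::nat\<Rightarrow>nat. strict_mono r \<and> mono (\<lambda>k. s (r k))"
proof -
  obtain f where f: "strict_mono f" "monoseq (\<lambda>n. s (f n))" using seq_monosub[of s] by blast
  show ?thesis
  proof (cases "\<forall>m n. m \<le> n \<longrightarrow> s (f m) \<le> s (f n)")
    case True
    then show ?thesis using f(1) by (intro exI[of _ f]) (auto intro: monoI)
  next
    case False
    then have dec: "\<forall>m n. m \<le> n \<longrightarrow> s (f n) \<le> s (f m)" using f(2) unfolding monoseq_def by blast
    define v where "v = (LEAST v. \<exists>k. s (f k) = v)"
    have "\<exists>k. s (f k) = v" unfolding v_def by (rule LeastI_ex) blast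
    then obtain N where N: "s (f N) = v" by blast
    have const: "s (f k) = v" if "N \<le> k" for k
    proof -
      have "s (f k) \<le> v" using dec that N by metis
      moreover have "v \<le> s (f k)" unfolding v_def by (rule Least_le) auto
      ultimately show ?thesis by simp
    qed
    have "strict_mono (\<lambda>k. f (k + N))" using f(1) unfolding strict_mono_def by simp
    moreover have "mono (\<lambda>k. s (f (k + N)))" using const by (intro monoI) simp
    ultimately show ?thesis by blast
  qed
qed

lemma dickson: fixes F :: "nat \<Rightarrow> 'b \<Rightarrow> nat" shows "finite J \<Longrightarrow> \<exists>r::nat\<Rightarrow>nat. strict_mono r \<and> (\<forall>t\<in>J. mono (\<lambda>k. F (r k) t))"
proof (induction J rule: finite_induct)
  case empty
  have "strict_mono (id::nat\<Rightarrow>nat)" by (simp add: strict_mono_def)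
  then show ?case by blast
next
  case (insert t J)
  then obtain r :: "nat \<Rightarrow> nat" where r: "strict_mono r" "\<forall>t\<in>J. mono (\<lambda>k. F (r k) t)" by blast
  obtain r' :: "nat \<Rightarrow> nat" where r': "strict_mono r'" "mono (\<lambda>k. F (r (r' k)) t)"
    using nat_mono_sub[of "\<lambda>k. F (r k) t"] by blast
  have "strict_mono (r \<circ> r')" using r(1) r'(1) by (rule strict_mono_o)
  moreover have "mono (\<lambda>k. F ((r \<circ> r') k) t')" if "t' \<in> insert t J" for t'
  proof (cases "t' = t")
    case True then show ?thesis using r'(2) by simp
  next
    case False
    then have "t' \<in> J" using that by simp
    then have m: "mono (\<lambda>k. F (r k) t')" using r(2) by blast
    show ?thesis using monoD[OF m] monoD[OF strict_mono_mono[OF r'(1)]] by (intro monoI) simp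
  qed
  ultimately show ?case by blast
qed

lemma closed_pre_plus:
  fixes X :: "'a::{topological_group_add,t2_space} set"
  assumes "closed X" shows "closed {y. y + c \<in> X}" "closed {y. c + y \<in> X}" "closed {y. y - c \<in> X}"
  "closed {y. c - y \<in> X}"
proof -
  have "isCont (\<lambda>y::'a. y + c) x" "isCont (\<lambda>y::'a. y - c) x" "isCont (\<lambda>y::'a. c + y) x"
  "isCont (\<lambda>y::'a. c - y) x" for x
  by (intro continuous_intros)+
  from continuous_closed_vimage[OF assms this(1)] continuous_closed_vimage[OF assms this(2)]
   continuous_closed_vimage[OF assms this(3)] continuous_closed_vimage[OF assms this(4)]
  show "closed {y. y + c \<in> X}" "closed {y. c + y \<in> X}" "closed {y. y - c \<in> X}"
  "closed {y. c - y \<in> X}" by (auto simp: vimage_def)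
qed

lemma open_pre_plus:
  fixes X :: "'a::{topological_group_add,t2_space} set"
  assumes "open X" shows "open {y. y + c \<in> X}" "open {y. c + y \<in> X}" "open {y. y - c \<in> X}"
  "open {y. c - y \<in> X}"
proof -
  have "isCont (\<lambda>y::'a. y + c) x" "isCont (\<lambda>y::'a. y - c) x" "isCont (\<lambda>y::'a. c + y) x"
  "isCont (\<lambda>y::'a. c - y) x" for x
  by (intro continuous_intros)+
  from continuous_open_vimage[OF assms this(1)] continuous_open_vimage[OF assms this(2)]
   continuous_open_vimage[OF assms this(3)] continuous_open_vimage[OF assms this(4)]
  show "open {y. y + c \<in> X}" "open {y. c + y \<in> X}" "open {y. y - c \<in> X}"
  "open {y. c - y \<in> X}" by (auto simp: vimage_def)
qed

context
  fixes n :: nat and \<omega> :: "nat \<Rightarrow> 'a::{topological_ab_group_add, t2_space, second_countable_topology}"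
begin

abbreviation ws where "ws \<equiv> word_sum \<omega>"

lemma ws_Nil[simp]: "ws [] = 0" by (simp add: word_sum_def)
lemma ws_Cons[simp]: "ws (j # \<mu>) = \<omega> j + ws \<mu>" by (simp add: word_sum_def)
lemma ws_append[simp]: "ws (\<mu> @ \<nu>) = ws \<mu> + ws \<nu>" by (simp add: word_sum_def)
lemma ws_remove1: "j \<in> set \<mu> \<Longrightarrow> ws \<mu> = \<omega> j + ws (remove1 j \<mu>)"
  by (simp add: word_sum_def sum_list_map_remove1)

lemma inv_closed: "omega_invariant n \<omega> Y \<Longrightarrow> closed Y"
  by (simp add: omega_invariant_def)

lemma inv_fwd: "omega_invariant n \<omega> Y \<Longrightarrow> y \<in> Y \<Longrightarrow> is_word n \<mu> \<Longrightarrow> y + ws \<mu> \<in> Y"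
proof (induction \<mu> arbitrary: y)
  case Nil then show ?case by simp
next
  case (Cons j \<mu>)
  have "y + \<omega> j \<in> Y" using Cons.prems by (auto simp: omega_invariant_def is_word_def)
  then have "(y + \<omega> j) + ws \<mu> \<in> Y" using Cons by (auto simp: is_word_def)
  then show ?case by (simp add: add.assoc)
qed

lemma inv_Un: "omega_invariant n \<omega> Y1 \<Longrightarrow> omega_invariant n \<omega> Y2 \<Longrightarrow> omega_invariant n \<omega> (Y1 \<union> Y2)"
  unfolding omega_invariant_def by blast

lemma inv_empty: "omega_invariant n \<omega> {}"
  unfolding omega_invariant_def by blast

lemma inv_Union: "finite F \<Longrightarrow> \<forall>Y\<in>F. omega_invariant n \<omega> Y \<Longrightarrow> omega_invariant n \<omega> (\<Union>F)"
  by (induction F rule: finite_induct) (auto intro: inv_Un inv_empty)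

lemma prime_finite:
  assumes "omega_prime n \<omega> X" "X \<noteq> {}"
  shows "finite F \<Longrightarrow> \<forall>Y\<in>F. omega_invariant n \<omega> Y \<Longrightarrow> X \<subseteq> \<Union>F \<Longrightarrow> \<exists>Y\<in>F. X \<subseteq> Y"
proof (induction F rule: finite_induct)
  case empty then show ?case using assms(2) by auto
next
  case (insert Y F)
  have "omega_invariant n \<omega> (\<Union>F)" using insert by (auto intro: inv_Union)
  moreover have "X \<subseteq> Y \<union> \<Union>F" using insert by auto
  ultimately have "X \<subseteq> Y \<or> X \<subseteq> \<Union>F" using assms(1) insert.prems unfolding omega_prime_def by blast
  then show ?case using insert by blast
qed

lemma ii_imp_i:
  assumes ii: "\<forall>\<gamma>0\<in>X. \<forall>\<gamma>1\<in>X. \<forall>U0 U1. open U0 \<longrightarrow> open U1 \<longrightarrow> \<gamma>0 \<in> U0 \<longrightarrow> \<gamma>1 \<in> U1 \<longrightarrow>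
                (\<exists>\<gamma>\<in>X. \<exists>\<mu> \<nu>. is_word n \<mu> \<and> is_word n \<nu> \<and>
                    \<gamma> + word_sum \<omega> \<mu> \<in> U0 \<and> \<gamma> + word_sum \<omega> \<nu> \<in> U1)"
  shows "omega_prime n \<omega> X"
  unfolding omega_prime_def
proof (intro allI impI)
  fix X1 X2 assume i1: "omega_invariant n \<omega> X1" and i2: "omega_invariant n \<omega> X2" and sub: "X \<subseteq> X1 \<union> X2"
  show "X \<subseteq> X1 \<or> X \<subseteq> X2"
  proof (rule ccontr)
    assume "\<not> (X \<subseteq> X1 \<or> X \<subseteq> X2)"
    then obtain g0 g1 where g: "g0 \<in> X" "g0 \<notin> X1" "g1 \<in> X" "g1 \<notin> X2" by blast
    have "open (- X1)" "open (- X2)" using i1 i2 by (auto simp: inv_closed)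
    then obtain \<gamma> \<mu> \<nu> where "\<gamma> \<in> X" "is_word n \<mu>" "is_word n \<nu>" "\<gamma> + ws \<mu> \<in> - X1" "\<gamma> + ws \<nu> \<in> - X2"
      using ii g by (metis ComplI)
    then show False using sub inv_fwd[OF i1] inv_fwd[OF i2] by blast
  qed
qed

lemma iii_imp_i:
  assumes iii: "\<forall>\<gamma>0\<in>X. \<forall>\<gamma>1\<in>X. \<exists>\<mu>s \<nu>s :: nat \<Rightarrow> nat list.
                (\<forall>k. is_word n (\<mu>s k) \<and> is_word n (\<nu>s k)
                     \<and> \<gamma>0 - word_sum \<omega> (\<mu>s k) \<in> X \<and> \<gamma>1 - word_sum \<omega> (\<nu>s k) \<in> X)
                \<and> (\<lambda>k. (\<gamma>0 - word_sum \<omega> (\<mu>s k)) - (\<gamma>1 - word_sum \<omega> (\<nu>s k))) \<longlonglongrightarrow> 0"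
  shows "omega_prime n \<omega> X"
  unfolding omega_prime_def
proof (intro allI impI)
  fix X1 X2 assume i1: "omega_invariant n \<omega> X1" and i2: "omega_invariant n \<omega> X2" and sub: "X \<subseteq> X1 \<union> X2"
  show "X \<subseteq> X1 \<or> X \<subseteq> X2"
  proof (rule ccontr)
    assume "\<not> (X \<subseteq> X1 \<or> X \<subseteq> X2)"
    then obtain g0 g1 where g: "g0 \<in> X" "g0 \<notin> X1" "g1 \<in> X" "g1 \<notin> X2" by blast
    obtain \<mu>s \<nu>s where w: "\<And>k. is_word n (\<mu>s k) \<and> is_word n (\<nu>s k)
                     \<and> g0 - ws (\<mu>s k) \<in> X \<and> g1 - ws (\<nu>s k) \<in> X"
      and lim: "(\<lambda>k. (g0 - ws (\<mu>s k)) - (g1 - ws (\<nu>s k))) \<longlonglongrightarrow> 0"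
      using iii g by blast
    have "(\<lambda>k. g0 - ((g0 - ws (\<mu>s k)) - (g1 - ws (\<nu>s k)))) \<longlonglongrightarrow> g0 - 0"
      by (intro tendsto_intros lim)
    moreover have "open (- X1)" using i1 by (auto simp: inv_closed)
    ultimately have "eventually (\<lambda>k. g0 - ((g0 - ws (\<mu>s k)) - (g1 - ws (\<nu>s k))) \<in> - X1) sequentially"
      using g by (intro topological_tendstoD) auto
    then obtain k where k: "g0 - ((g0 - ws (\<mu>s k)) - (g1 - ws (\<nu>s k))) \<notin> X1"
      by (auto dest: eventually_happens)
    have b: "g1 - ws (\<nu>s k) \<in> X1"
    proof (rule ccontr)
      assume "g1 - ws (\<nu>s k) \<notin> X1"
      then have "g1 - ws (\<nu>s k) \<in> X2" using sub w by blast
      from inv_fwd[OF i2 this] w have "g1 - ws (\<nu>s k) + ws (\<nu>s k) \<in> X2" by blast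
      then show False using g by simp
    qed
    from inv_fwd[OF i1 b] w have "g1 - ws (\<nu>s k) + ws (\<mu>s k) \<in> X1" by blast
    moreover have "g1 - ws (\<nu>s k) + ws (\<mu>s k) = g0 - ((g0 - ws (\<mu>s k)) - (g1 - ws (\<nu>s k)))"
      by (simp add: algebra_simps)
    ultimately show False using k by metis
  qed
qed


lemma back_I: "(\<forall>i\<in>I. \<forall>x\<in>X. x - \<omega> i \<in> X) \<Longrightarrow> set \<nu> \<subseteq> I \<Longrightarrow> x \<in> X \<Longrightarrow> x - ws \<nu> \<in> X"
proof (induction \<nu> arbitrary: x)
  case Nil then show ?case by simp
next
  case (Cons j \<nu>)
  then have "x - \<omega> j \<in> X" by auto
  then have "(x - \<omega> j) - ws \<nu> \<in> X" using Cons by auto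
  then show ?case by (simp add: algebra_simps)
qed

lemma O_closed: "closed (Omega_set n \<omega> I)"
  unfolding Omega_set_def by (rule closed_Inter) auto

lemma O_gen1: "i \<in> {1..n} \<Longrightarrow> \<omega> i \<in> Omega_set n \<omega> I"
  unfolding Omega_set_def by auto
lemma O_gen2: "i \<in> I \<Longrightarrow> - \<omega> i \<in> Omega_set n \<omega> I"
  unfolding Omega_set_def by auto
lemma O_add: "x \<in> Omega_set n \<omega> I \<Longrightarrow> y \<in> Omega_set n \<omega> I \<Longrightarrow> x + y \<in> Omega_set n \<omega> I"
  unfolding Omega_set_def by auto
lemma O_min: "closed S \<Longrightarrow> \<omega> ` {1..n} \<subseteq> S \<Longrightarrow> (\<lambda>i. - \<omega> i) ` I \<subseteq> S \<Longrightarrow> (\<forall>x\<in>S. \<forall>y\<in>S. x + y \<in> S)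
   \<Longrightarrow> Omega_set n \<omega> I \<subseteq> S"
  unfolding Omega_set_def by auto
lemma O_zero: "i \<in> I \<Longrightarrow> i \<in> {1..n} \<Longrightarrow> 0 \<in> Omega_set n \<omega> I"
  using O_add[OF O_gen1 O_gen2, of i i I] by simp

lemma O_word: "0 \<in> Omega_set n \<omega> I \<Longrightarrow> is_word n \<mu> \<Longrightarrow> ws \<mu> \<in> Omega_set n \<omega> I"
  by (induction \<mu>) (auto simp: is_word_def intro!: O_add O_gen1)

lemma O_negword: "0 \<in> Omega_set n \<omega> I \<Longrightarrow> set \<nu> \<subseteq> I \<Longrightarrow> - ws \<nu> \<in> Omega_set n \<omega> I"
proof (induction \<nu>)
  case Nil then show ?case by simp
next
  case (Cons j \<nu>)
  have "- \<omega> j + - ws \<nu> \<in> Omega_set n \<omega> I" by (rule O_add[OF O_gen2]) (use Cons in auto)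
  then show ?case by (simp add: algebra_simps)
qed

definition Tset where "Tset I = {ws \<mu> - ws \<nu> | \<mu> \<nu>. is_word n \<mu> \<and> set \<nu> \<subseteq> I}"

lemma Tset_add: "\<forall>x\<in>Tset I. \<forall>y\<in>Tset I. x + y \<in> Tset I"
proof (intro ballI)
  fix x y assume "x \<in> Tset I" "y \<in> Tset I"
  then obtain \<mu> \<nu> \<mu>' \<nu>' where xe: "x = ws \<mu> - ws \<nu>" and "is_word n \<mu>" "set \<nu> \<subseteq> I"
    and ye: "y = ws \<mu>' - ws \<nu>'" and "is_word n \<mu>'" "set \<nu>' \<subseteq> I" unfolding Tset_def by blast
  have "x + y = ws (\<mu> @ \<mu>') - ws (\<nu> @ \<nu>')" unfolding xe ye by (simp add: algebra_simps)
  moreover have "is_word n (\<mu> @ \<mu>')" "set (\<nu> @ \<nu>') \<subseteq> I"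
    using \<open>is_word n \<mu>\<close> \<open>is_word n \<mu>'\<close> \<open>set \<nu> \<subseteq> I\<close> \<open>set \<nu>' \<subseteq> I\<close> by (auto simp: is_word_def)
  ultimately
  show "x + y \<in> Tset I" unfolding Tset_def by blast
qed

lemma O_sub_closure: "Omega_set n \<omega> I \<subseteq> closure (Tset I)"
proof (rule O_min)
  show "closed (closure (Tset I))" by simp
  show "\<omega> ` {1..n} \<subseteq> closure (Tset I)"
  proof
    fix x assume "x \<in> \<omega> ` {1..n}"
    then obtain i where "i \<in> {1..n}" "x = \<omega> i" by auto
    then have "x = ws [i] - ws []" "is_word n [i]" "set [] \<subseteq> I" by (auto simp: is_word_def)
    then have "x \<in> Tset I" unfolding Tset_def by blast
    then show "x \<in> closure (Tset I)" using closure_subset by blast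
  qed
  show "(\<lambda>i. - \<omega> i) ` I \<subseteq> closure (Tset I)"
  proof
    fix x assume "x \<in> (\<lambda>i. - \<omega> i) ` I"
    then obtain i where "i \<in> I" "x = - \<omega> i" by auto
    then have "x = ws [] - ws [i]" "is_word n []" "set [i] \<subseteq> I" by (auto simp: is_word_def)
    then have "x \<in> Tset I" unfolding Tset_def by blast
    then show "x \<in> closure (Tset I)" using closure_subset by blast
  qed
  show "\<forall>x\<in>closure (Tset I). \<forall>y\<in>closure (Tset I). x + y \<in> closure (Tset I)"
    using closure_add[OF Tset_add] by blast
qed

lemma X_plus_O:
  assumes "closed X" "\<forall>i\<in>{1..n}. \<forall>x\<in>X. x + \<omega> i \<in> X" "\<forall>i\<in>I. \<forall>x\<in>X. x - \<omega> i \<in> X"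
  shows "x \<in> X \<Longrightarrow> s \<in> Omega_set n \<omega> I \<Longrightarrow> x + s \<in> X"
proof -
  let ?S = "{s. \<forall>x\<in>X. x + s \<in> X}"
  have "Omega_set n \<omega> I \<subseteq> ?S"
  proof (rule O_min)
    have "?S = (\<Inter>x\<in>X. {s. x + s \<in> X})" by auto
    also have "closed \<dots>" using closed_pre_plus(2)[OF assms(1)] by (intro closed_INT) auto
    finally show "closed ?S" .
    show "\<omega> ` {1..n} \<subseteq> ?S" using assms(2) by auto
    show "(\<lambda>i. - \<omega> i) ` I \<subseteq> ?S" using assms(3) by auto
    show "\<forall>x\<in>?S. \<forall>y\<in>?S. x + y \<in> ?S" by (simp add: add.assoc[symmetric])
  qed
  then show "x \<in> X \<Longrightarrow> s \<in> Omega_set n \<omega> I \<Longrightarrow> x + s \<in> X" by blast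
qed

lemma iv_imp_ii:
  assumes I: "I \<noteq> {}" "I \<subseteq> {1..n}" and X: "X = (\<lambda>x. \<gamma> + x) ` Omega_set n \<omega> I"
  shows "\<forall>\<gamma>0\<in>X. \<forall>\<gamma>1\<in>X. \<forall>U0 U1. open U0 \<longrightarrow> open U1 \<longrightarrow> \<gamma>0 \<in> U0 \<longrightarrow> \<gamma>1 \<in> U1 \<longrightarrow>
                (\<exists>\<gamma>\<in>X. \<exists>\<mu> \<nu>. is_word n \<mu> \<and> is_word n \<nu> \<and>
                    \<gamma> + word_sum \<omega> \<mu> \<in> U0 \<and> \<gamma> + word_sum \<omega> \<nu> \<in> U1)"
proof (intro ballI allI impI)
  fix g0 g1 U0 U1 assume g: "g0 \<in> X" "g1 \<in> X" and U: "open U0" "open U1" "g0 \<in> U0" "g1 \<in> U1"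
  have z: "0 \<in> Omega_set n \<omega> I" using I O_zero by blast
  obtain a b where ab: "a \<in> Omega_set n \<omega> I" "b \<in> Omega_set n \<omega> I" "g0 = \<gamma> + a" "g1 = \<gamma> + b"
    using g X by auto
  have "open {y. \<gamma> + y \<in> U0}" "a \<in> {y. \<gamma> + y \<in> U0}" "a \<in> closure (Tset I)"
    using open_pre_plus(2)[OF U(1)] ab U O_sub_closure by auto
  then have "{y. \<gamma> + y \<in> U0} \<inter> Tset I \<noteq> {}" using open_Int_closure_eq_empty by blast
  then obtain \<mu>0 \<nu>0 where w0: "is_word n \<mu>0" "set \<nu>0 \<subseteq> I" "\<gamma> + (ws \<mu>0 - ws \<nu>0) \<in> U0"
    unfolding Tset_def by blast
  have "open {y. \<gamma> + y \<in> U1}" "b \<in> {y. \<gamma> + y \<in> U1}" "b \<in> closure (Tset I)"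
    using open_pre_plus(2)[OF U(2)] ab U O_sub_closure by auto
  then have "{y. \<gamma> + y \<in> U1} \<inter> Tset I \<noteq> {}" using open_Int_closure_eq_empty by blast
  then obtain \<mu>1 \<nu>1 where w1: "is_word n \<mu>1" "set \<nu>1 \<subseteq> I" "\<gamma> + (ws \<mu>1 - ws \<nu>1) \<in> U1"
    unfolding Tset_def by blast
  have "- ws (\<nu>0 @ \<nu>1) \<in> Omega_set n \<omega> I" by (rule O_negword[OF z]) (use w0 w1 in auto)
  then have d: "\<gamma> + - ws (\<nu>0 @ \<nu>1) \<in> X" using X by auto
  have "is_word n (\<mu>0 @ \<nu>1)" "is_word n (\<mu>1 @ \<nu>0)" using w0 w1 I by (auto simp: is_word_def)
  moreover have "(\<gamma> + - ws (\<nu>0 @ \<nu>1)) + ws (\<mu>0 @ \<nu>1) = \<gamma> + (ws \<mu>0 - ws \<nu>0)"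
    "(\<gamma> + - ws (\<nu>0 @ \<nu>1)) + ws (\<mu>1 @ \<nu>0) = \<gamma> + (ws \<mu>1 - ws \<nu>1)" by (simp_all add: algebra_simps)
  ultimately show "\<exists>\<gamma>\<in>X. \<exists>\<mu> \<nu>. is_word n \<mu> \<and> is_word n \<nu> \<and>
                    \<gamma> + word_sum \<omega> \<mu> \<in> U0 \<and> \<gamma> + word_sum \<omega> \<nu> \<in> U1"
    using d w0 w1 by metis
qed


lemma ws_rep_Suc: "ws (replicate (Suc k) j) = \<omega> j + ws (replicate k j)" by simp

lemma step1:
  assumes inv: "omega_invariant n \<omega> X" and J: "J \<subseteq> {1..n}" "finite J"
  shows "x \<in> X \<Longrightarrow> \<forall>j\<in>J. \<exists>k. x - ws (replicate k j) \<notin> X \<Longrightarrow>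
     \<exists>m \<mu>. m \<in> X \<and> (\<forall>j\<in>J. m - \<omega> j \<notin> X) \<and> set \<mu> \<subseteq> J \<and> x = m + ws \<mu>"
proof -
  define L where "L x j = (LEAST k. x - ws (replicate k j) \<notin> X)" for x j
  define f where "f x = (\<Sum>j\<in>J. L x j)" for x
  show "x \<in> X \<Longrightarrow> \<forall>j\<in>J. \<exists>k. x - ws (replicate k j) \<notin> X \<Longrightarrow>
     \<exists>m \<mu>. m \<in> X \<and> (\<forall>j\<in>J. m - \<omega> j \<notin> X) \<and> set \<mu> \<subseteq> J \<and> x = m + ws \<mu>"
  proof (induction "f x" arbitrary: x rule: less_induct)
    case less
    show ?case
    proof (cases "\<forall>j\<in>J. x - \<omega> j \<notin> X")
      case True
      then show ?thesis using less.prems by (intro exI[of _ x] exI[of _ "[]"]) auto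
    next
      case False
      then obtain j where j: "j \<in> J" "x - \<omega> j \<in> X" by blast
      define y where "y = x - \<omega> j"
      have jn: "j \<in> {1..n}" using j J by auto
      have fw: "z - ws (replicate k l) \<notin> X" if "x' = z + \<omega> j" "x' - ws (replicate k l) \<notin> X" for x' z k l
      proof
        assume "z - ws (replicate k l) \<in> X"
        then have "(z - ws (replicate k l)) + \<omega> j \<in> X" using inv jn by (auto simp: omega_invariant_def)
        then show False using that by (simp add: algebra_simps)
      qed
      have xy: "x = y + \<omega> j" by (simp add: y_def)
      have hy: "\<forall>l\<in>J. \<exists>k. y - ws (replicate k l) \<notin> X"
        using less.prems(2) fw[OF xy] by blast
      have le: "L y l \<le> L x l" if "l \<in> J" for l
      proof -
        have "x - ws (replicate (L x l) l) \<notin> X"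
          unfolding L_def by (rule LeastI_ex) (use less.prems(2) that in blast)
        then have "y - ws (replicate (L x l) l) \<notin> X" using fw[OF xy] by blast
        then show ?thesis unfolding L_def by (rule Least_le)
      qed
      have lt: "L y j < L x j"
      proof -
        have xL: "x - ws (replicate (L x j) j) \<notin> X"
          unfolding L_def by (rule LeastI_ex) (use less.prems(2) j in blast)
        have "L x j \<noteq> 0"
        proof
          assume "L x j = 0" then show False using xL less.prems(1) by simp
        qed
        then obtain k0 where k0: "L x j = Suc k0" using not0_implies_Suc by blast
        have eq: "y - ws (replicate k0 j) = x - ws (replicate (Suc k0) j)"
          by (simp add: y_def algebra_simps)
        have "y - ws (replicate k0 j) \<notin> X" using xL k0 unfolding eq by simp
        then have "L y j \<le> k0" unfolding L_def by (rule Least_le)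
        then show ?thesis using k0 by simp
      qed
      have "f y < f x" unfolding f_def
        by (rule sum_strict_mono_ex1) (use J le lt j in auto)
      from less.hyps[OF this] j hy obtain m \<mu> where
        m: "m \<in> X" "\<forall>j\<in>J. m - \<omega> j \<notin> X" "set \<mu> \<subseteq> J" "y = m + ws \<mu>"
        unfolding y_def by blast
      then have "x = m + ws (j # \<mu>)" "set (j # \<mu>) \<subseteq> J" using xy j by (auto simp: algebra_simps)
      then show ?thesis using m by blast
    qed
  qed
qed

lemma Y_inv:
  assumes inv: "omega_invariant n \<omega> X" and j: "j \<in> {1..n}"
  shows "omega_invariant n \<omega> {x. \<forall>k. x - ws (replicate k j) \<in> X}"
  unfolding omega_invariant_def
proof (intro conjI ballI)
  have "{x. \<forall>k. x - ws (replicate k j) \<in> X} = (\<Inter>k. {x. x - ws (replicate k j) \<in> X})" by auto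
  also have "closed \<dots>" using closed_pre_plus(3)[OF inv_closed[OF inv]] by (intro closed_INT) auto
  finally show "closed {x. \<forall>k. x - ws (replicate k j) \<in> X}" .
next
  fix i x assume i: "i \<in> {1..n}" and x: "x \<in> {x. \<forall>k. x - ws (replicate k j) \<in> X}"
  have "(x - ws (replicate k j)) + \<omega> i \<in> X" for k using x inv i by (auto simp: omega_invariant_def)
  then show "x + \<omega> i \<in> {x. \<forall>k. x - ws (replicate k j) \<in> X}" by (simp add: algebra_simps)
next
  fix x assume x: "x \<in> {x. \<forall>k. x - ws (replicate k j) \<in> X}"
  have "x - \<omega> j - ws (replicate k j) \<in> X" for k
    using x[simplified, rule_format, of "Suc k"] by (simp add: algebra_simps)
  then show "\<exists>i\<in>{1..n}. x - \<omega> i \<in> {x. \<forall>k. x - ws (replicate k j) \<in> X}"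
    by (intro bexI[of _ j]) (use j in auto)
qed

definition Bset where "Bset A = {a + ws \<mu> | a \<mu>. a \<in> A \<and> is_word n \<mu>}"

lemma Bset_Un: "Bset (A1 \<union> A2) = Bset A1 \<union> Bset A2"
  unfolding Bset_def by blast

lemma inv_closure:
  assumes inv: "omega_invariant n \<omega> X" and AX: "A \<subseteq> X" and i0: "i0 \<in> {1..n}"
    and bk: "\<forall>a\<in>A. a - \<omega> i0 \<in> A"
  shows "omega_invariant n \<omega> (closure (Bset A))" "closure (Bset A) \<subseteq> X"
proof -
  show "closure (Bset A) \<subseteq> X"
  proof (rule closure_minimal)
    show "Bset A \<subseteq> X" unfolding Bset_def using AX inv_fwd[OF inv] by blast
    show "closed X" using inv by (simp add: inv_closed)
  qed
  show "omega_invariant n \<omega> (closure (Bset A))"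
    unfolding omega_invariant_def
  proof (intro conjI ballI)
    show "closed (closure (Bset A))" by simp
  next
    fix i x assume i: "i \<in> {1..n}" and x: "x \<in> closure (Bset A)"
    have c: "continuous_on (closure (Bset A)) (\<lambda>x. x + \<omega> i)" by (intro continuous_intros)
    have "(\<lambda>x. x + \<omega> i) ` Bset A \<subseteq> closure (Bset A)"
    proof
      fix y assume "y \<in> (\<lambda>x. x + \<omega> i) ` Bset A"
      then obtain a \<mu> where a: "a \<in> A" and w: "is_word n \<mu>" and ye: "y = a + ws \<mu> + \<omega> i" unfolding Bset_def by blast
      have y: "y = a + ws (\<mu> @ [i])" unfolding ye by (simp add: algebra_simps)
      have w: "is_word n (\<mu> @ [i])" using i w by (auto simp: is_word_def)
      have "y \<in> Bset A" unfolding Bset_def using a w y by blast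
      then show "y \<in> closure (Bset A)" by (rule subsetD[OF closure_subset])
    qed
    from image_closure_subset[OF c _ this] x show "x + \<omega> i \<in> closure (Bset A)" by auto
  next
    fix x assume x: "x \<in> closure (Bset A)"
    have c: "continuous_on (closure (Bset A)) (\<lambda>x. x - \<omega> i0)" by (intro continuous_intros)
    have "(\<lambda>x. x - \<omega> i0) ` Bset A \<subseteq> closure (Bset A)"
    proof
      fix y assume "y \<in> (\<lambda>x. x - \<omega> i0) ` Bset A"
      then obtain a \<mu> where a: "a \<in> A" and w: "is_word n \<mu>" and ye: "y = a + ws \<mu> - \<omega> i0" unfolding Bset_def by blast
      have y: "y = (a - \<omega> i0) + ws \<mu>" unfolding ye by (simp add: algebra_simps)
      have a2: "a - \<omega> i0 \<in> A" using bk a by blast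
      have "y \<in> Bset A" unfolding Bset_def using a2 w y by blast
      then show "y \<in> closure (Bset A)" by (rule subsetD[OF closure_subset])
    qed
    from image_closure_subset[OF c _ this] x have "x - \<omega> i0 \<in> closure (Bset A)" by auto
    then show "\<exists>i\<in>{1..n}. x - \<omega> i \<in> closure (Bset A)" using i0 by blast
  qed
qed

definition Hset where "Hset I = {ws \<mu> - ws \<nu> | \<mu> \<nu>. set \<mu> \<subseteq> I \<and> set \<nu> \<subseteq> I}"

lemma Hset_add: "\<forall>x\<in>Hset I. \<forall>y\<in>Hset I. x + y \<in> Hset I"
proof (intro ballI)
  fix x y assume "x \<in> Hset I" "y \<in> Hset I"
  then obtain \<mu> \<nu> \<mu>' \<nu>' where xe: "x = ws \<mu> - ws \<nu>" and "set \<mu> \<subseteq> I" "set \<nu> \<subseteq> I"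
    and ye: "y = ws \<mu>' - ws \<nu>'" and "set \<mu>' \<subseteq> I" "set \<nu>' \<subseteq> I" unfolding Hset_def by blast
  have "x + y = ws (\<mu> @ \<mu>') - ws (\<nu> @ \<nu>')" unfolding xe ye by (simp add: algebra_simps)
  moreover have "set (\<mu> @ \<mu>') \<subseteq> I" "set (\<nu> @ \<nu>') \<subseteq> I"
    using \<open>set \<mu> \<subseteq> I\<close> \<open>set \<mu>' \<subseteq> I\<close> \<open>set \<nu> \<subseteq> I\<close> \<open>set \<nu>' \<subseteq> I\<close> by auto
  ultimately show "x + y \<in> Hset I" unfolding Hset_def by blast
qed

lemma Hset_neg: "\<forall>x\<in>Hset I. - x \<in> Hset I"
proof
  fix x assume "x \<in> Hset I"
  then obtain \<mu> \<nu> where xe: "x = ws \<mu> - ws \<nu>" and "set \<mu> \<subseteq> I" "set \<nu> \<subseteq> I" unfolding Hset_def by blast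
  then have "- x = ws \<nu> - ws \<mu>" by simp
  then show "- x \<in> Hset I" using \<open>set \<mu> \<subseteq> I\<close> \<open>set \<nu> \<subseteq> I\<close> unfolding Hset_def by blast
qed

lemma Hset_word: "set \<mu> \<subseteq> I \<Longrightarrow> ws \<mu> \<in> Hset I"
  unfolding Hset_def by (rule CollectI, rule exI[of _ \<mu>], rule exI[of _ "[]"]) simp

lemma Hset_gen: "i \<in> I \<Longrightarrow> \<omega> i \<in> Hset I" "i \<in> I \<Longrightarrow> - \<omega> i \<in> Hset I"
  using Hset_word[of "[i]" I] Hset_neg by auto

lemma G0_add: "x \<in> closure (Hset I) \<Longrightarrow> y \<in> closure (Hset I) \<Longrightarrow> x + y \<in> closure (Hset I)"
  using closure_add[OF Hset_add] by blast
lemma G0_neg: "x \<in> closure (Hset I) \<Longrightarrow> - x \<in> closure (Hset I)"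
  using closure_neg[OF Hset_neg] by blast
lemma G0_diff: "x \<in> closure (Hset I) \<Longrightarrow> y \<in> closure (Hset I) \<Longrightarrow> x - y \<in> closure (Hset I)"
  using G0_add[OF _ G0_neg, of x I y] by simp
lemma G0_H: "x \<in> Hset I \<Longrightarrow> x \<in> closure (Hset I)"
  using closure_subset by blast

lemma G0_X:
  assumes inv: "omega_invariant n \<omega> X" and I: "I \<subseteq> {1..n}" and bk: "\<forall>i\<in>I. \<forall>x\<in>X. x - \<omega> i \<in> X"
  shows "g \<in> closure (Hset I) \<Longrightarrow> x \<in> X \<Longrightarrow> x + g \<in> X"
proof -
  let ?K = "{g. \<forall>x\<in>X. x + g \<in> X}"
  have "closure (Hset I) \<subseteq> ?K"
  proof (rule closure_minimal)
    show "Hset I \<subseteq> ?K"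
    proof
      fix g assume "g \<in> Hset I"
      then obtain \<mu> \<nu> where ge: "g = ws \<mu> - ws \<nu>" and "set \<mu> \<subseteq> I" "set \<nu> \<subseteq> I" unfolding Hset_def by blast
      have "x - ws \<nu> + ws \<mu> \<in> X" if "x \<in> X" for x
        using inv_fwd[OF inv back_I[OF bk \<open>set \<nu> \<subseteq> I\<close> that]] \<open>set \<mu> \<subseteq> I\<close> I by (auto simp: is_word_def)
      then show "g \<in> ?K" unfolding ge by (simp add: algebra_simps)
    qed
    have "?K = (\<Inter>x\<in>X. {s. x + s \<in> X})" by auto
    also have "closed \<dots>" using closed_pre_plus(2)[OF inv_closed[OF inv]] by (intro closed_INT) auto
    finally show "closed ?K" .
  qed
  then show "g \<in> closure (Hset I) \<Longrightarrow> x \<in> X \<Longrightarrow> x + g \<in> X" by blast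
qed

lemma G0_O:
  assumes I: "I \<subseteq> {1..n}" and z: "0 \<in> Omega_set n \<omega> I"
  shows "closure (Hset I) \<subseteq> Omega_set n \<omega> I"
proof (rule closure_minimal)
  show "closed (Omega_set n \<omega> I)" by (rule O_closed)
  show "Hset I \<subseteq> Omega_set n \<omega> I"
  proof
    fix g assume "g \<in> Hset I"
    then obtain \<mu> \<nu> where ge: "g = ws \<mu> + - ws \<nu>" and "set \<mu> \<subseteq> I" "set \<nu> \<subseteq> I" unfolding Hset_def by force
    show "g \<in> Omega_set n \<omega> I" unfolding ge
      by (rule O_add[OF O_word[OF z] O_negword[OF z]]) (use I \<open>set \<mu> \<subseteq> I\<close> \<open>set \<nu> \<subseteq> I\<close> in \<open>auto simp: is_word_def\<close>)
  qed
qed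


lemma Hset_zero: "0 \<in> Hset I"
  using Hset_word[of "[]" I] by simp

lemma prime_structure:
  assumes prime: "omega_prime n \<omega> X" and ne: "X \<noteq> {}" and inv: "omega_invariant n \<omega> X"
  defines "I \<equiv> {i\<in>{1..n}. \<forall>x\<in>X. x - \<omega> i \<in> X}"
  shows "I \<noteq> {} \<and> (\<exists>p. X = (\<lambda>x. p + x) ` Omega_set n \<omega> I)"
proof -
  define J where "J = {1..n} - I"
  define M where "M = {m\<in>X. \<forall>j\<in>J. m - \<omega> j \<notin> X}"
  let ?G = "closure (Hset I)"
  have Jsub: "J \<subseteq> {1..n}" "finite J" unfolding J_def by auto
  have Isub: "I \<subseteq> {1..n}" unfolding I_def by auto
  have bkI: "\<forall>i\<in>I. \<forall>x\<in>X. x - \<omega> i \<in> X" unfolding I_def by auto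
  have fwd: "\<forall>i\<in>{1..n}. \<forall>x\<in>X. x + \<omega> i \<in> X" using inv unfolding omega_invariant_def by auto
  have Xc: "closed X" using inv by (rule inv_closed)
  have MX: "M \<subseteq> X" unfolding M_def by auto
  define Y where "Y j = {x. \<forall>k. x - ws (replicate k j) \<in> X}" for j
  have cover: "X \<subseteq> closure (Bset M) \<union> \<Union>(Y ` J)"
  proof
    fix x assume x: "x \<in> X"
    show "x \<in> closure (Bset M) \<union> \<Union>(Y ` J)"
    proof (cases "\<exists>j\<in>J. \<forall>k. x - ws (replicate k j) \<in> X")
      case True then show ?thesis by (auto simp: Y_def)
    next
      case False
      then have "\<forall>j\<in>J. \<exists>k. x - ws (replicate k j) \<notin> X" by blast
      from step1[OF inv Jsub x this] obtain m \<mu> where m: "m \<in> X" "\<forall>j\<in>J. m - \<omega> j \<notin> X"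
        and mu: "set \<mu> \<subseteq> J" and xe: "x = m + ws \<mu>" by blast
      have "m \<in> M" using m unfolding M_def by blast
      moreover have "is_word n \<mu>" using mu Jsub unfolding is_word_def by blast
      ultimately have "x \<in> Bset M" unfolding Bset_def using xe by blast
      then show ?thesis using closure_subset by blast
    qed
  qed
  have MI: "I \<noteq> {}" if "m \<in> M" for m
  proof -
    from inv that MX obtain i where i: "i \<in> {1..n}" "m - \<omega> i \<in> X"
      unfolding omega_invariant_def by blast
    then have "i \<notin> J" using that unfolding M_def by blast
    then have "i \<in> I" using i unfolding J_def by blast
    then show ?thesis by blast
  qed
  have Gneg: "- \<omega> i \<in> ?G" if "i \<in> I" for i using Hset_gen(2)[OF that] G0_H by blast
  have GX: "x + g \<in> X" if "g \<in> ?G" "x \<in> X" for x g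
    using G0_X[OF inv Isub bkI that] .
  have Msat: "m + g \<in> M" if "m \<in> M" "g \<in> ?G" for m g
  proof -
    have mg: "m + g \<in> X" using GX that MX by blast
    have "(m + g) - \<omega> j \<notin> X" if j: "j \<in> J" for j
    proof
      assume "(m + g) - \<omega> j \<in> X"
      then have "(m + g - \<omega> j) + - g \<in> X" using GX G0_neg \<open>g \<in> ?G\<close> by blast
      then have "m - \<omega> j \<in> X" by (simp add: algebra_simps)
      then show False using \<open>m \<in> M\<close> j unfolding M_def by blast
    qed
    then show ?thesis using mg unfolding M_def by blast
  qed
  have ZM: "omega_invariant n \<omega> (closure (Bset A)) \<and> closure (Bset A) \<subseteq> X"
    if A: "A \<subseteq> M" "\<forall>a\<in>A. \<forall>g\<in>?G. a + g \<in> A" for A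
  proof (cases "A = {}")
    case True
    then show ?thesis by (simp add: Bset_def inv_empty)
  next
    case False
    then obtain a where "a \<in> A" by blast
    then have "I \<noteq> {}" using MI A by blast
    then obtain i0 where i0: "i0 \<in> I" by blast
    have "\<forall>a\<in>A. a - \<omega> i0 \<in> A"
    proof
      fix a assume "a \<in> A"
      then have "a + - \<omega> i0 \<in> A" using A Gneg[OF i0] by blast
      then show "a - \<omega> i0 \<in> A" by simp
    qed
    moreover have "A \<subseteq> X" using A MX by blast
    moreover have "i0 \<in> {1..n}" using i0 Isub by blast
    ultimately show ?thesis using inv_closure[OF inv] by blast
  qed
  have XZ: "X \<subseteq> closure (Bset M)"
  proof -
    have "\<exists>Y0\<in>insert (closure (Bset M)) (Y ` J). X \<subseteq> Y0"
    proof (rule prime_finite[OF prime ne])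
      show "finite (insert (closure (Bset M)) (Y ` J))" using Jsub by simp
      show "X \<subseteq> \<Union> (insert (closure (Bset M)) (Y ` J))" using cover by auto
      have "omega_invariant n \<omega> (closure (Bset M))" using ZM[of M] Msat by blast
      moreover have "omega_invariant n \<omega> (Y j)" if "j \<in> J" for j
        unfolding Y_def by (rule Y_inv[OF inv]) (use that Jsub in blast)
      ultimately show "\<forall>Y0\<in>insert (closure (Bset M)) (Y ` J). omega_invariant n \<omega> Y0" by blast
    qed
    moreover have False if j: "j \<in> J" and XY: "X \<subseteq> Y j" for j
    proof -
      have "x - \<omega> j \<in> X" if "x \<in> X" for x
        using XY that unfolding Y_def by (auto dest!: spec[of _ 1])
      then have "j \<in> I" using j Jsub unfolding I_def by blast
      then show False using j unfolding J_def by blast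
    qed
    ultimately show ?thesis by blast
  qed
  have "M \<noteq> {}"
  proof
    assume "M = {}"
    then have "Bset M = {}" unfolding Bset_def by blast
    then show False using XZ ne by simp
  qed
  then obtain p where p: "p \<in> M" by blast
  have Ine: "I \<noteq> {}" using MI[OF p] .
  then obtain i1 where "i1 \<in> I" by blast
  then have z: "0 \<in> Omega_set n \<omega> I" using O_zero Isub by blast
  have coset: "q - p \<in> ?G" if q: "q \<in> M" for q
  proof (rule ccontr)
    assume nq: "q - p \<notin> ?G"
    define V1 where "V1 = {w. (p - q) + w \<in> - ?G}"
    have "open V1" unfolding V1_def by (rule open_pre_plus(2)) auto
    moreover have "0 \<in> V1"
    proof -
      have "p - q \<notin> ?G"
      proof
        assume "p - q \<in> ?G"
        from G0_neg[OF this] show False using nq by simp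
      qed
      then show ?thesis unfolding V1_def by simp
    qed
    ultimately obtain V where V: "open V" "0 \<in> V" "\<forall>a\<in>V. \<forall>b\<in>V. a - b \<in> V1"
      using exists_V by blast
    define Ob where "Ob = {y. \<exists>g\<in>?G. y - q - g \<in> V}"
    have "Ob = (\<Union>g\<in>?G. {y. y - (q + g) \<in> V})" unfolding Ob_def by (auto simp: diff_diff_eq)
    moreover have "open (\<Union>g\<in>?G. {y. y - (q + g) \<in> V})"
      using open_pre_plus(3)[OF V(1)] by (intro open_UN) auto
    ultimately have Oopen: "open Ob" by simp
    have Osat: "y + g \<in> Ob" if "y \<in> Ob" "g \<in> ?G" for y g
    proof -
      from that obtain g0 where g0: "g0 \<in> ?G" "y - q - g0 \<in> V" unfolding Ob_def by blast
      have "(y + g) - q - (g0 + g) = y - q - g0" by (simp add: algebra_simps)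
      then show ?thesis unfolding Ob_def using g0 G0_add[OF g0(1) that(2)] by (metis (mono_tags, lifting) mem_Collect_eq)
    qed
    have qO: "q \<in> Ob" unfolding Ob_def using V(2) G0_H[OF Hset_zero] by force
    have pO: "p \<notin> closure Ob"
    proof -
      define N where "N = {y. y - p \<in> V}"
      have Nopen: "open N" unfolding N_def by (rule open_pre_plus(3)[OF V(1)])
      have "N \<inter> Ob = {}"
      proof (rule ccontr)
        assume "N \<inter> Ob \<noteq> {}"
        then obtain y g where y: "y - p \<in> V" "g \<in> ?G" "y - q - g \<in> V" unfolding N_def Ob_def by blast
        then have "(y - p) - (y - q - g) \<in> V1" using V(3) by blast
        then have "(p - q) + ((y - p) - (y - q - g)) \<notin> ?G" unfolding V1_def by simp
        moreover have "(p - q) + ((y - p) - (y - q - g)) = g" by (simp add: algebra_simps)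
        ultimately show False using y(2) by simp
      qed
      then have "N \<inter> closure Ob = {}" using open_Int_closure_eq_empty[OF Nopen] by blast
      moreover have "p \<in> N" unfolding N_def using V(2) by simp
      ultimately show ?thesis by blast
    qed
    define M1 where "M1 = M - Ob"
    define M2 where "M2 = M \<inter> Ob"
    have sat1: "\<forall>a\<in>M1. \<forall>g\<in>?G. a + g \<in> M1"
    proof (intro ballI)
      fix a g assume a: "a \<in> M1" and g: "g \<in> ?G"
      have "a + g \<in> M" using Msat a g unfolding M1_def by blast
      moreover have "a + g \<notin> Ob"
      proof
        assume "a + g \<in> Ob"
        then have "(a + g) + - g \<in> Ob" using Osat G0_neg[OF g] by blast
        then show False using a unfolding M1_def by simp
      qed
      ultimately show "a + g \<in> M1" unfolding M1_def by blast
    qed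
    have sat2: "\<forall>a\<in>M2. \<forall>g\<in>?G. a + g \<in> M2"
      using Msat Osat unfolding M2_def by blast
    have inv1: "omega_invariant n \<omega> (closure (Bset M1))" using ZM[of M1] sat1 unfolding M1_def by blast
    have inv2: "omega_invariant n \<omega> (closure (Bset M2))" using ZM[of M2] sat2 unfolding M2_def by blast
    have "M = M1 \<union> M2" unfolding M1_def M2_def by blast
    then have "X \<subseteq> closure (Bset M1) \<union> closure (Bset M2)"
      using XZ by (simp add: Bset_Un closure_Un)
    then have cases: "X \<subseteq> closure (Bset M1) \<or> X \<subseteq> closure (Bset M2)"
      using prime inv1 inv2 unfolding omega_prime_def by blast
    define Ms where "Ms = {y. \<forall>j\<in>J. y - \<omega> j \<notin> X}"
    have "Ms = (\<Inter>j\<in>J. {y. y - \<omega> j \<in> - X})" unfolding Ms_def by auto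
    moreover have "open (\<Inter>j\<in>J. {y. y - \<omega> j \<in> - X})"
    proof -
      have oc: "\<And>c. open {y. y - c \<in> - X}" using open_pre_plus(3)[of "- X"] Xc by blast
      show ?thesis by (rule open_INT) (use Jsub(2) oc in blast)+
    qed
    ultimately have Msopen: "open Ms" by simp
    have key: "ws \<mu> \<in> ?G" if a: "a \<in> X" "is_word n \<mu>" "a + ws \<mu> \<in> Ms" for a \<mu>
    proof -
      have "set \<mu> \<subseteq> I"
      proof
        fix j assume j: "j \<in> set \<mu>"
        show "j \<in> I"
        proof (rule ccontr)
          assume "j \<notin> I"
          then have jJ: "j \<in> J" using j a(2) unfolding J_def is_word_def by blast
          have "is_word n (remove1 j \<mu>)" using a(2) unfolding is_word_def
            by (meson order_trans set_remove1_subset)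
          then have "a + ws (remove1 j \<mu>) \<in> X" using inv_fwd[OF inv a(1)] by blast
          moreover have "a + ws \<mu> - \<omega> j = a + ws (remove1 j \<mu>)"
            using ws_remove1[OF j] by (simp add: algebra_simps)
          moreover have "a + ws \<mu> - \<omega> j \<notin> X" using a(3) jJ unfolding Ms_def by blast
          ultimately show False by metis
        qed
      qed
      then show ?thesis using Hset_word G0_H by blast
    qed
    have MMs: "M \<subseteq> Ms" unfolding M_def Ms_def by blast
    from cases show False
    proof
      assume XZ1: "X \<subseteq> closure (Bset M1)"
      have "q \<in> closure (Bset M1)" using XZ1 q MX by blast
      moreover have "q \<in> Ob \<inter> Ms" using qO q MMs by blast
      moreover have "open (Ob \<inter> Ms)" using Oopen Msopen by blast
      ultimately have "(Ob \<inter> Ms) \<inter> Bset M1 \<noteq> {}" using open_Int_closure_eq_empty by blast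
      then obtain a \<mu> where a: "a \<in> M1" "is_word n \<mu>" "a + ws \<mu> \<in> Ob" "a + ws \<mu> \<in> Ms"
        unfolding Bset_def by blast
      have "ws \<mu> \<in> ?G" using key[OF _ a(2) a(4)] a(1) MX unfolding M1_def by blast
      then have "(a + ws \<mu>) + - ws \<mu> \<in> Ob" using Osat a(3) G0_neg by blast
      then show False using a(1) unfolding M1_def by simp
    next
      assume XZ2: "X \<subseteq> closure (Bset M2)"
      have "p \<in> closure (Bset M2)" using XZ2 p MX by blast
      moreover have "p \<in> - closure Ob \<inter> Ms" using pO p MMs by blast
      moreover have "open (- closure Ob \<inter> Ms)" using Msopen by blast
      ultimately have "(- closure Ob \<inter> Ms) \<inter> Bset M2 \<noteq> {}" using open_Int_closure_eq_empty by blast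
      then obtain a \<mu> where a: "a \<in> M2" "is_word n \<mu>" "a + ws \<mu> \<notin> closure Ob" "a + ws \<mu> \<in> Ms"
        unfolding Bset_def by blast
      have "ws \<mu> \<in> ?G" using key[OF _ a(2) a(4)] a(1) MX unfolding M2_def by blast
      then have "a + ws \<mu> \<in> Ob" using Osat a(1) unfolding M2_def by blast
      then show False using a(3) closure_subset by blast
    qed
  qed
  have "X = (\<lambda>x. p + x) ` Omega_set n \<omega> I"
  proof
    show "(\<lambda>x. p + x) ` Omega_set n \<omega> I \<subseteq> X"
      using X_plus_O[OF Xc fwd bkI] p MX by blast
    have "closure (Bset M) \<subseteq> {y. y - p \<in> Omega_set n \<omega> I}"
    proof (rule closure_minimal)
      show "closed {y. y - p \<in> Omega_set n \<omega> I}" by (rule closed_pre_plus(3)[OF O_closed])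
      show "Bset M \<subseteq> {y. y - p \<in> Omega_set n \<omega> I}"
      proof
        fix y assume "y \<in> Bset M"
        then obtain m \<mu> where m: "m \<in> M" "is_word n \<mu>" "y = m + ws \<mu>" unfolding Bset_def by blast
        have "m - p \<in> Omega_set n \<omega> I" using coset[OF m(1)] G0_O[OF Isub z] by blast
        from O_add[OF this O_word[OF z m(2)]] have "(m - p) + ws \<mu> \<in> Omega_set n \<omega> I" .
        moreover have "(m - p) + ws \<mu> = y - p" using m(3) by (simp add: algebra_simps)
        ultimately show "y \<in> {y. y - p \<in> Omega_set n \<omega> I}" by simp
      qed
    qed
    then show "X \<subseteq> (\<lambda>x. p + x) ` Omega_set n \<omega> I"
    proof -
      assume h: "closure (Bset M) \<subseteq> {y. y - p \<in> Omega_set n \<omega> I}"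
      show ?thesis
      proof
        fix x assume "x \<in> X"
        then have "x - p \<in> Omega_set n \<omega> I" using XZ h by blast
        then show "x \<in> (\<lambda>x. p + x) ` Omega_set n \<omega> I" by (intro image_eqI[of _ _ "x - p"]) auto
      qed
    qed
  qed
  then show ?thesis using Ine by blast
qed


lemma ws_filter: "ws \<mu> = ws (filter P \<mu>) + ws (filter (\<lambda>x. \<not> P x) \<mu>)"
  by (induction \<mu>) (auto simp: algebra_simps)

definition msum where "msum A = sum_mset (image_mset \<omega> A)"

lemma ws_msum: "ws \<rho> = msum (mset \<rho>)"
  unfolding word_sum_def msum_def by (metis mset_map sum_mset_sum_list)

lemma msum_add: "msum (A + B) = msum A + msum B" by (simp add: msum_def)
lemma msum_add_mset: "msum (add_mset j A) = \<omega> j + msum A" by (simp add: msum_def)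

lemma LC_decomp:
  assumes lc: "locally_compact_space (euclidean :: 'a topology)"
    and I: "I \<subseteq> {1..n}" and z0: "0 \<in> Omega_set n \<omega> I"
    and maxl: "\<forall>j\<in>{1..n} - I. - \<omega> j \<notin> Omega_set n \<omega> I"
    and z: "z \<in> Omega_set n \<omega> I"
  shows "\<exists>\<rho> g. set \<rho> \<subseteq> {1..n} - I \<and> g \<in> closure (Hset I) \<and> z = ws \<rho> + g"
proof -
  define J where "J = {1..n} - I"
  define SH where "SH = {ws \<rho> + h | \<rho> h. set \<rho> \<subseteq> J \<and> h \<in> Hset I}"
  have finJ: "finite J" by (simp add: J_def)
  have T_SH: "Tset I \<subseteq> SH"
  proof
    fix x assume "x \<in> Tset I"
    then obtain \<mu> \<nu> where xe: "x = ws \<mu> - ws \<nu>" and w: "is_word n \<mu>" and nu: "set \<nu> \<subseteq> I"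
      unfolding Tset_def by blast
    have "x = ws (filter (\<lambda>x. x \<in> J) \<mu>) + (ws (filter (\<lambda>x. x \<notin> J) \<mu>) - ws \<nu>)"
      unfolding xe using ws_filter[of \<mu> "\<lambda>x. x \<in> J"] by (simp add: algebra_simps)
    moreover have "set (filter (\<lambda>x. x \<in> J) \<mu>) \<subseteq> J" by auto
    moreover have "set (filter (\<lambda>x. x \<notin> J) \<mu>) \<subseteq> I" using w unfolding is_word_def J_def by auto
    then have "ws (filter (\<lambda>x. x \<notin> J) \<mu>) - ws \<nu> \<in> Hset I" using nu unfolding Hset_def by blast
    ultimately show "x \<in> SH" unfolding SH_def by blast
  qed
  have SH_O: "closure SH \<subseteq> Omega_set n \<omega> I"
  proof (rule closure_minimal)
    show "closed (Omega_set n \<omega> I)" by (rule O_closed)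
    show "SH \<subseteq> Omega_set n \<omega> I"
    proof
      fix y assume "y \<in> SH"
      then obtain \<rho> h where y: "y = ws \<rho> + h" "set \<rho> \<subseteq> J" "h \<in> Hset I" unfolding SH_def by blast
      have "ws \<rho> \<in> Omega_set n \<omega> I" using y(2) by (intro O_word[OF z0]) (auto simp: is_word_def J_def)
      moreover have "h \<in> Omega_set n \<omega> I" using G0_O[OF I z0] G0_H[OF y(3)] by blast
      ultimately show "y \<in> Omega_set n \<omega> I" unfolding y(1) by (rule O_add)
    qed
  qed
  have zc: "z \<in> closure SH" using z O_sub_closure closure_mono[OF T_SH] by blast
  have nj: "- \<omega> j \<notin> closure SH" if "j \<in> J" for j using maxl SH_O that unfolding J_def by blast
  have "\<exists>U K. open U \<and> compact K \<and> z \<in> U \<and> U \<subseteq> K"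
    using lc unfolding locally_compact_space_def by (simp add: compactin_euclidean_iff)
  then obtain U K where UK: "open U" "compact K" "z \<in> U" "U \<subseteq> K" by blast
  define E where "E = {mset \<rho> | \<rho>. set \<rho> \<subseteq> J \<and> (\<exists>h\<in>Hset I. ws \<rho> + h \<in> U)}"
  have finE: "finite E"
  proof (rule ccontr)
    assume "infinite E"
    then obtain f :: "nat \<Rightarrow> nat multiset" where f: "inj f" "range f \<subseteq> E" using infinite_countable_subset by blast
    have "\<forall>k. \<exists>\<rho> h. f k = mset \<rho> \<and> set \<rho> \<subseteq> J \<and> h \<in> Hset I \<and> ws \<rho> + h \<in> U"
      using f(2) unfolding E_def by blast
    then obtain \<rho> h where \<rho>h: "\<And>k. f k = mset (\<rho> k) \<and> set (\<rho> k) \<subseteq> J \<and> h k \<in> Hset I \<and> ws (\<rho> k) + h k \<in> U"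
      by metis
    define c where "c k = ws (\<rho> k) + h k" for k
    from dickson[OF finJ, of "\<lambda>k t. count (f k) t"] obtain r :: "nat \<Rightarrow> nat"
      where r: "strict_mono r" "\<forall>t\<in>J. mono (\<lambda>k. count (f (r k)) t)" by blast
    have "\<forall>k. (c \<circ> r) k \<in> K" using \<rho>h UK(4) unfolding c_def by auto
    with compact_imp_seq_compact[OF UK(2)] obtain l r2 where
      l: "l \<in> K" "strict_mono r2" "((c \<circ> r) \<circ> r2) \<longlonglongrightarrow> l" unfolding seq_compact_def by blast
    define s where "s = r \<circ> r2"
    have s: "strict_mono s" using r(1) l(2) unfolding s_def by (rule strict_mono_o)
    have cs: "(\<lambda>k. c (s k)) \<longlonglongrightarrow> l" using l(3) unfolding s_def comp_def by simp
    have sub: "f (s k) \<subseteq># f (s (Suc k))" for k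
    proof -
      have "count (f (s k)) t \<le> count (f (s (Suc k))) t" for t
      proof (cases "t \<in> J")
        case True
        have "r2 k \<le> r2 (Suc k)" using l(2) by (simp add: strict_mono_less_eq)
        then show ?thesis using monoD[OF r(2)[rule_format, OF True]] unfolding s_def by simp
      next
        case False
        then have "t \<notin># f (s k)" using \<rho>h[of "s k"] by auto
        then show ?thesis by (simp add: not_in_iff)
      qed
      then show ?thesis by (simp add: subseteq_mset_def)
    qed
    have neq: "f (s k) \<noteq> f (s (Suc k))" for k
    proof
      assume "f (s k) = f (s (Suc k))"
      then have "s k = s (Suc k)" using f(1) by (simp add: inj_eq)
      then show False using s by (simp add: strict_mono_eq)
    qed
    define D where "D k = f (s (Suc k)) - f (s k)" for k
    have fD: "f (s k) + D k = f (s (Suc k))" for k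
      unfolding D_def using sub[of k] by (rule subset_mset.add_diff_inverse)
    have Dne: "D k \<noteq> {#}" for k using fD[of k] neq[of k] by auto
    have DJ: "set_mset (D k) \<subseteq> J" for k
    proof -
      have "set_mset (D k) \<subseteq> set_mset (f (s (Suc k)))" unfolding D_def by (auto dest: in_diffD)
      then show ?thesis using \<rho>h[of "s (Suc k)"] by auto
    qed
    have cmsum: "c k = msum (f k) + h k" for k unfolding c_def using \<rho>h[of k] by (simp add: ws_msum)
    define d where "d k = c (s (Suc k)) - c (s k)" for k
    have dk: "d k = msum (D k) + (h (s (Suc k)) - h (s k))" for k
    proof -
      have "d k = msum (f (s k) + D k) + h (s (Suc k)) - (msum (f (s k)) + h (s k))"
        unfolding d_def cmsum fD by simp
      then show ?thesis by (simp add: msum_add algebra_simps)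
    qed
    have "d \<longlonglongrightarrow> l - l" unfolding d_def
      by (intro tendsto_diff LIMSEQ_Suc[OF cs] cs)
    then have d0: "d \<longlonglongrightarrow> 0" by simp
    define Q where "Q = {w. \<forall>j\<in>J. w - \<omega> j \<notin> closure SH}"
    have "Q = (\<Inter>j\<in>J. {w. w - \<omega> j \<in> - closure SH})" unfolding Q_def by auto
    moreover have "open (\<Inter>j\<in>J. {w. w - \<omega> j \<in> - closure SH})"
    proof -
      have oc: "\<And>c. open {y. y - c \<in> - closure SH}" using open_pre_plus(3)[of "- closure SH"] by blast
      show ?thesis by (rule open_INT) (use finJ oc in blast)+
    qed
    ultimately have oQ: "open Q" by simp
    have Q0: "0 \<in> Q" unfolding Q_def using nj by simp
    have "eventually (\<lambda>k. d k \<in> Q) sequentially" by (rule topological_tendstoD[OF d0 oQ Q0])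
    then obtain k where dQ: "d k \<in> Q" by (auto dest: eventually_happens)
    from Dne[of k] obtain j where j: "j \<in># D k" by (meson multiset_nonemptyE)
    have jJ: "j \<in> J" using DJ j by blast
    define \<rho>' where "\<rho>' = sorted_list_of_multiset (D k - {#j#})"
    have wsr: "ws \<rho>' = msum (D k - {#j#})" unfolding \<rho>'_def by (simp add: ws_msum)
    have setr: "set \<rho>' \<subseteq> J" unfolding \<rho>'_def using DJ[of k] by (auto dest: in_diffD)
    have hd: "h (s (Suc k)) - h (s k) \<in> Hset I"
      using Hset_add Hset_neg \<rho>h[of "s k"] \<rho>h[of "s (Suc k)"] by (metis diff_conv_add_uminus)
    have "msum (D k) = \<omega> j + msum (D k - {#j#})"
      using msum_add_mset[of j "D k - {#j#}"] insert_DiffM[OF j] by simp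
    then have "d k - \<omega> j = ws \<rho>' + (h (s (Suc k)) - h (s k))" unfolding dk wsr by (simp add: algebra_simps)
    then have "d k - \<omega> j \<in> SH" unfolding SH_def using setr hd by blast
    then show False using dQ jJ closure_subset unfolding Q_def by blast
  qed
  have cover: "U \<inter> SH \<subseteq> (\<Union>A\<in>E. {y. y - msum A \<in> closure (Hset I)})"
  proof
    fix y assume "y \<in> U \<inter> SH"
    then obtain \<rho> h where y: "y = ws \<rho> + h" "set \<rho> \<subseteq> J" "h \<in> Hset I" "y \<in> U" unfolding SH_def by blast
    then have "mset \<rho> \<in> E" unfolding E_def by blast
    moreover have "y - msum (mset \<rho>) = h" using y(1) by (simp add: ws_msum)
    ultimately show "y \<in> (\<Union>A\<in>E. {y. y - msum A \<in> closure (Hset I)})" using G0_H[OF y(3)] by force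
  qed
  have "closed (\<Union>A\<in>E. {y. y - msum A \<in> closure (Hset I)})"
    using finE closed_pre_plus(3)[of "closure (Hset I)"] by (intro closed_UN) auto
  moreover have "z \<in> closure (U \<inter> SH)" using open_Int_closure_subset[OF UK(1)] UK(3) zc by blast
  ultimately have "z \<in> (\<Union>A\<in>E. {y. y - msum A \<in> closure (Hset I)})"
    using cover closure_minimal by blast
  then obtain \<rho> where "set \<rho> \<subseteq> J" "z - msum (mset \<rho>) \<in> closure (Hset I)" unfolding E_def by blast
  moreover have "z = ws \<rho> + (z - msum (mset \<rho>))" by (simp add: ws_msum)
  ultimately show ?thesis unfolding J_def by blast
qed


lemma i_imp_iv:
  assumes prime: "omega_prime n \<omega> X" and ne: "X \<noteq> {}" and inv: "omega_invariant n \<omega> X"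
  shows "\<exists>\<gamma> I. I \<noteq> {} \<and> I \<subseteq> {1..n} \<and> X = (\<lambda>x. \<gamma> + x) ` Omega_set n \<omega> I"
proof -
  define I where "I = {i\<in>{1..n}. \<forall>x\<in>X. x - \<omega> i \<in> X}"
  have "I \<subseteq> {1..n}" unfolding I_def by blast
  moreover have "I \<noteq> {} \<and> (\<exists>p. X = (\<lambda>x. p + x) ` Omega_set n \<omega> I)"
    using prime_structure[OF prime ne inv] unfolding I_def .
  ultimately show ?thesis by blast
qed

lemma i_imp_iii:
  assumes lc: "locally_compact_space (euclidean :: 'a topology)"
    and prime: "omega_prime n \<omega> X" and ne: "X \<noteq> {}" and inv: "omega_invariant n \<omega> X"
  shows "\<forall>\<gamma>0\<in>X. \<forall>\<gamma>1\<in>X. \<exists>\<mu>s \<nu>s :: nat \<Rightarrow> nat list.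
                (\<forall>k. is_word n (\<mu>s k) \<and> is_word n (\<nu>s k)
                     \<and> \<gamma>0 - word_sum \<omega> (\<mu>s k) \<in> X \<and> \<gamma>1 - word_sum \<omega> (\<nu>s k) \<in> X)
                \<and> (\<lambda>k. (\<gamma>0 - word_sum \<omega> (\<mu>s k)) - (\<gamma>1 - word_sum \<omega> (\<nu>s k))) \<longlonglongrightarrow> 0"
proof -
  define I where "I = {i\<in>{1..n}. \<forall>x\<in>X. x - \<omega> i \<in> X}"
  obtain p where Ine: "I \<noteq> {}"
    and Xp: "X = (\<lambda>x. p + x) ` Omega_set n \<omega> I"
  proof -
    have "I \<noteq> {} \<and> (\<exists>p. X = (\<lambda>x. p + x) ` Omega_set n \<omega> I)"
      using prime_structure[OF prime ne inv] unfolding I_def .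
    then show ?thesis using that by blast
  qed
  have Isub: "I \<subseteq> {1..n}" unfolding I_def by auto
  have bkI: "\<forall>i\<in>I. \<forall>x\<in>X. x - \<omega> i \<in> X" unfolding I_def by auto
  have fwd: "\<forall>i\<in>{1..n}. \<forall>x\<in>X. x + \<omega> i \<in> X" using inv unfolding omega_invariant_def by auto
  have Xc: "closed X" using inv by (rule inv_closed)
  obtain i1 where "i1 \<in> I" using Ine by blast
  then have z0: "0 \<in> Omega_set n \<omega> I" using O_zero Isub by blast
  have maxl: "\<forall>j\<in>{1..n} - I. - \<omega> j \<notin> Omega_set n \<omega> I"
  proof (intro ballI notI)
    fix j assume j: "j \<in> {1..n} - I" and o: "- \<omega> j \<in> Omega_set n \<omega> I"
    have "x + - \<omega> j \<in> X" if "x \<in> X" for x using X_plus_O[OF Xc fwd bkI that o] .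
    then have "j \<in> I" using j unfolding I_def by force
    then show False using j by blast
  qed
  show ?thesis
  proof (intro ballI)
    fix g0 g1 assume g: "g0 \<in> X" "g1 \<in> X"
    obtain a b where ab: "a \<in> Omega_set n \<omega> I" "b \<in> Omega_set n \<omega> I" "g0 = p + a" "g1 = p + b"
      using g Xp by auto
    obtain \<rho>0 e0 where a: "set \<rho>0 \<subseteq> {1..n} - I" "e0 \<in> closure (Hset I)" "a = ws \<rho>0 + e0"
      using LC_decomp[OF lc Isub z0 maxl ab(1)] by blast
    obtain \<rho>1 e1 where b: "set \<rho>1 \<subseteq> {1..n} - I" "e1 \<in> closure (Hset I)" "b = ws \<rho>1 + e1"
      using LC_decomp[OF lc Isub z0 maxl ab(2)] by blast
    have "e0 - e1 \<in> closure (Hset I)" using G0_diff a(2) b(2) by blast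
    then obtain hs where hs: "\<forall>k. hs k \<in> Hset I" "hs \<longlonglongrightarrow> e0 - e1"
      unfolding closure_sequential by blast
    have "\<forall>k. \<exists>\<mu> \<nu>. hs k = ws \<mu> - ws \<nu> \<and> set \<mu> \<subseteq> I \<and> set \<nu> \<subseteq> I"
      using hs(1) unfolding Hset_def by blast
    then obtain \<mu>' \<nu>' where mn: "\<And>k. hs k = ws (\<mu>' k) - ws (\<nu>' k) \<and> set (\<mu>' k) \<subseteq> I \<and> set (\<nu>' k) \<subseteq> I"
      by metis
    define \<mu>s where "\<mu>s k = \<rho>0 @ \<mu>' k" for k
    define \<nu>s where "\<nu>s k = \<rho>1 @ \<nu>' k" for k
    have pe0: "p + e0 \<in> X" using Xp G0_O[OF Isub z0] a(2) by blast
    have pe1: "p + e1 \<in> X" using Xp G0_O[OF Isub z0] b(2) by blast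
    have P: "is_word n (\<mu>s k) \<and> is_word n (\<nu>s k) \<and> g0 - ws (\<mu>s k) \<in> X \<and> g1 - ws (\<nu>s k) \<in> X" for k
    proof (intro conjI)
      show "is_word n (\<mu>s k)" "is_word n (\<nu>s k)" using a(1) b(1) mn[of k] Isub
        unfolding \<mu>s_def \<nu>s_def is_word_def by auto
      have "g0 - ws (\<mu>s k) = (p + e0) - ws (\<mu>' k)" unfolding \<mu>s_def ab(3) a(3) by (simp add: algebra_simps)
      then show "g0 - ws (\<mu>s k) \<in> X" using back_I[OF bkI _ pe0] mn[of k] by simp
      have "g1 - ws (\<nu>s k) = (p + e1) - ws (\<nu>' k)" unfolding \<nu>s_def ab(4) b(3) by (simp add: algebra_simps)
      then show "g1 - ws (\<nu>s k) \<in> X" using back_I[OF bkI _ pe1] mn[of k] by simp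
    qed
    have eq: "(g0 - ws (\<mu>s k)) - (g1 - ws (\<nu>s k)) = (e0 - e1) - hs k" for k
      unfolding \<mu>s_def \<nu>s_def ab(3,4) a(3) b(3) using mn[of k] by (simp add: algebra_simps)
    have "(\<lambda>k. (e0 - e1) - hs k) \<longlonglongrightarrow> (e0 - e1) - (e0 - e1)"
      by (intro tendsto_diff tendsto_const hs(2))
    then have L: "(\<lambda>k. (g0 - ws (\<mu>s k)) - (g1 - ws (\<nu>s k))) \<longlonglongrightarrow> 0" unfolding eq by simp
    show "\<exists>\<mu>s \<nu>s :: nat \<Rightarrow> nat list.
                (\<forall>k. is_word n (\<mu>s k) \<and> is_word n (\<nu>s k)
                     \<and> g0 - word_sum \<omega> (\<mu>s k) \<in> X \<and> g1 - word_sum \<omega> (\<nu>s k) \<in> X)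
                \<and> (\<lambda>k. (g0 - word_sum \<omega> (\<mu>s k)) - (g1 - word_sum \<omega> (\<nu>s k))) \<longlonglongrightarrow> 0"
      using P L by (intro exI[of _ \<mu>s] exI[of _ \<nu>s]) simp
  qed
qed

end

theorem proposition4p11:
  fixes \<omega> :: "nat \<Rightarrow> 'a::{topological_ab_group_add, t2_space, second_countable_topology}"
    and X :: "'a set" and n :: nat
  assumes lc: "locally_compact_space (euclidean :: 'a topology)"
    and n2: "n \<ge> 2"
    and ne: "X \<noteq> {}"
    and inv: "omega_invariant n \<omega> X"
  shows "(omega_prime n \<omega> X
          \<longleftrightarrow> (\<forall>\<gamma>0\<in>X. \<forall>\<gamma>1\<in>X. \<forall>U0 U1. open U0 \<longrightarrow> open U1 \<longrightarrow> \<gamma>0 \<in> U0 \<longrightarrow> \<gamma>1 \<in> U1 \<longrightarrow>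
                (\<exists>\<gamma>\<in>X. \<exists>\<mu> \<nu>. is_word n \<mu> \<and> is_word n \<nu> \<and>
                    \<gamma> + word_sum \<omega> \<mu> \<in> U0 \<and> \<gamma> + word_sum \<omega> \<nu> \<in> U1)))
       \<and> (omega_prime n \<omega> X
          \<longleftrightarrow> (\<forall>\<gamma>0\<in>X. \<forall>\<gamma>1\<in>X. \<exists>\<mu>s \<nu>s :: nat \<Rightarrow> nat list.
                (\<forall>k. is_word n (\<mu>s k) \<and> is_word n (\<nu>s k)
                     \<and> \<gamma>0 - word_sum \<omega> (\<mu>s k) \<in> X \<and> \<gamma>1 - word_sum \<omega> (\<nu>s k) \<in> X)
                \<and> (\<lambda>k. (\<gamma>0 - word_sum \<omega> (\<mu>s k)) - (\<gamma>1 - word_sum \<omega> (\<nu>s k))) \<longlonglongrightarrow> 0))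
       \<and> (omega_prime n \<omega> X
          \<longleftrightarrow> (\<exists>\<gamma> I. I \<noteq> {} \<and> I \<subseteq> {1..n} \<and> X = (\<lambda>x. \<gamma> + x) ` Omega_set n \<omega> I))"
proof (intro conjI iffI)
  assume p: "omega_prime n \<omega> X"
  obtain \<gamma> I where g: "I \<noteq> {}" "I \<subseteq> {1..n}" "X = (\<lambda>x. \<gamma> + x) ` Omega_set n \<omega> I"
    using i_imp_iv[OF p ne inv] by blast
  show "\<forall>\<gamma>0\<in>X. \<forall>\<gamma>1\<in>X. \<forall>U0 U1. open U0 \<longrightarrow> open U1 \<longrightarrow> \<gamma>0 \<in> U0 \<longrightarrow> \<gamma>1 \<in> U1 \<longrightarrow>
                (\<exists>\<gamma>\<in>X. \<exists>\<mu> \<nu>. is_word n \<mu> \<and> is_word n \<nu> \<and>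
                    \<gamma> + word_sum \<omega> \<mu> \<in> U0 \<and> \<gamma> + word_sum \<omega> \<nu> \<in> U1)"
    by (rule iv_imp_ii[OF g])
next
  assume "\<forall>\<gamma>0\<in>X. \<forall>\<gamma>1\<in>X. \<forall>U0 U1. open U0 \<longrightarrow> open U1 \<longrightarrow> \<gamma>0 \<in> U0 \<longrightarrow> \<gamma>1 \<in> U1 \<longrightarrow>
                (\<exists>\<gamma>\<in>X. \<exists>\<mu> \<nu>. is_word n \<mu> \<and> is_word n \<nu> \<and>
                    \<gamma> + word_sum \<omega> \<mu> \<in> U0 \<and> \<gamma> + word_sum \<omega> \<nu> \<in> U1)"
  then show "omega_prime n \<omega> X" by (rule ii_imp_i)
next
  assume p: "omega_prime n \<omega> X"
  show "\<forall>\<gamma>0\<in>X. \<forall>\<gamma>1\<in>X. \<exists>\<mu>s \<nu>s :: nat \<Rightarrow> nat list.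
                (\<forall>k. is_word n (\<mu>s k) \<and> is_word n (\<nu>s k)
                     \<and> \<gamma>0 - word_sum \<omega> (\<mu>s k) \<in> X \<and> \<gamma>1 - word_sum \<omega> (\<nu>s k) \<in> X)
                \<and> (\<lambda>k. (\<gamma>0 - word_sum \<omega> (\<mu>s k)) - (\<gamma>1 - word_sum \<omega> (\<nu>s k))) \<longlonglongrightarrow> 0"
    by (rule i_imp_iii[OF lc p ne inv])
next
  assume "\<forall>\<gamma>0\<in>X. \<forall>\<gamma>1\<in>X. \<exists>\<mu>s \<nu>s :: nat \<Rightarrow> nat list.
                (\<forall>k. is_word n (\<mu>s k) \<and> is_word n (\<nu>s k)
                     \<and> \<gamma>0 - word_sum \<omega> (\<mu>s k) \<in> X \<and> \<gamma>1 - word_sum \<omega> (\<nu>s k) \<in> X)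
                \<and> (\<lambda>k. (\<gamma>0 - word_sum \<omega> (\<mu>s k)) - (\<gamma>1 - word_sum \<omega> (\<nu>s k))) \<longlonglongrightarrow> 0"
  then show "omega_prime n \<omega> X" by (rule iii_imp_i)
next
  assume p: "omega_prime n \<omega> X"
  show "\<exists>\<gamma> I. I \<noteq> {} \<and> I \<subseteq> {1..n} \<and> X = (\<lambda>x. \<gamma> + x) ` Omega_set n \<omega> I"
    by (rule i_imp_iv[OF p ne inv])
next
  assume "\<exists>\<gamma> I. I \<noteq> {} \<and> I \<subseteq> {1..n} \<and> X = (\<lambda>x. \<gamma> + x) ` Omega_set n \<omega> I"
  then obtain \<gamma> I where g: "I \<noteq> {}" "I \<subseteq> {1..n}" "X = (\<lambda>x. \<gamma> + x) ` Omega_set n \<omega> I" by blast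
  show "omega_prime n \<omega> X" by (rule ii_imp_i[OF iv_imp_ii[OF g]])
qed

end
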